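(* Let $B$ be a finite set of vincular patterns, let $p\in S_k$ be a prefix pattern and let $\vec v\in\mathbb{N}^{k+1}$. Suppose every permutation $\pi\in A(p,\vec v)$ contains a copy of some $(\sigma,X)\in B$ such that all positions of the head of that copy lie in $\{1,\dots,k\}$ (i.e. the letters of the copy corresponding to the head of $(\sigma,X)$ are among $\pi_1\cdots\pi_k$). Then $\vec v$ is a gap vector for $p$ with respect to $B$.
   Context: For a word $w$ of distinct integers, $\mathrm{red}(w)$ replaces the $i$-th smallest letter by $i$; $u\sim w$ means $\mathrm{red}(u)=\mathrm{red}(w)$. A vincular pattern of length $\ell$ is a pair $(\sigma,X)$ with $\sigma\in S_\ell$ and $X\subseteq[\ell-1]$. A permutation $\pi\in S_n$ contains $(\sigma,X)$ if there are indices $i_1<\dots<i_\ell$ with $\mathrm{red}(\pi_{i_1}\cdots\pi_{i_\ell})=\sigma$ and $i_{x+1}=i_x+1$ for every $x\in X$; the subsequence $\pi_{i_1}\cdots\pi_{i_\ell}$ is a copy. $\pi$ avoids a set $B$ of such patterns if it contains none of them. The head of $(\sigma,X)$ is the pattern formed by its first $m+1$ letters, $(\mathrm{red}(\sigma_1\cdots\sigma_{m+1}),X)$, where $m=\max X$ ($m=0$ if $X=\emptyset$). For a word $w\in[n]^k$ with distinct letters, let $c_i$ be its $i$-th smallest letter, $c_0=0$, $c_{k+1}=n+1$; the spacing vector $\vec g(n,w)\in\mathbb{N}^{k+1}$ has $i$-th component $c_i-c_{i-1}-1$. For $p\in S_k$ and such $w$ with $\mathrm{red}(w)=p$, let $S_n^B(p;w)$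 be the set of $B$-avoiding $\pi\in S_n$ with $\pi_i=w_i$ for $1\le i\le k$. A vector $\vec v\in\mathbb{N}^{k+1}$ is a gap vector for $p$ with respect to $B$ if for every $n$ and every such $w$ with $\vec g(n,w)\ge\vec v$ (componentwise), $S_n^B(p;w)=\emptyset$. Finally, $A(p,\vec v)$ is the set of permutations $\pi\in S_{k+|\vec v|}$ (where $|\vec v|$ is the sum of the components) with $\pi_1\cdots\pi_k\sim p$ and $\vec g(k+|\vec v|,\pi_1\cdots\pi_k)=\vec v$. *)

theory Defs
  imports Main "HOL-Combinatorics.Multiset_Permutations"
begin

(* Permutations of S_n are lists that are arrangements of {1..n}
   (library notion permutations_of_set). Words are nat lists;
   list positions are 0-indexed internally. *)

type_synonym vpattern = "nat list \<times> nat set"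

definition red :: "nat list \<Rightarrow> nat list" where
  "red w = map (\<lambda>x. card {y \<in> set w. y \<le> x}) w"

definition valid_vpattern :: "vpattern \<Rightarrow> bool" where
  "valid_vpattern P = (fst P \<in> permutations_of_set {1..length (fst P)}
                       \<and> snd P \<subseteq> {1..<length (fst P)})"

(* idx j (0-indexed j < l) is the (0-indexed) position of the (j+1)-st letter
   of a copy of (sigma, X) in pi *)
definition copy_at :: "nat list \<Rightarrow> vpattern \<Rightarrow> (nat \<Rightarrow> nat) \<Rightarrow> bool" where
  "copy_at \<pi> P idx =
     (let \<sigma> = fst P; X = snd P; l = length \<sigma> in
       (\<forall>j. Suc j < l \<longrightarrow> idx j < idx (Suc j)) \<and>
       (\<forall>j<l. idx j < length \<pi>) \<and>
       red (map (\<lambda>j. \<pi> ! idx j) [0..<l]) = \<sigma> \<and>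
       (\<forall>x\<in>X. idx x = Suc (idx (x - 1))))"

definition contains :: "nat list \<Rightarrow> vpattern \<Rightarrow> bool" where
  "contains \<pi> P = (\<exists>idx. copy_at \<pi> P idx)"

definition avoids :: "nat list \<Rightarrow> vpattern set \<Rightarrow> bool" where
  "avoids \<pi> B = (\<forall>P\<in>B. \<not> contains \<pi> P)"

(* m = max X (0 if X empty); the head consists of the first m+1 letters,
   i.e. 0-indexed letters 0..m; its last letter has 0-indexed index m *)
definition head_last :: "nat set \<Rightarrow> nat" where
  "head_last X = (if X = {} then 0 else Max X)"

definition gapvec :: "nat \<Rightarrow> nat list \<Rightarrow> nat list" where
  "gapvec n w = (let c = 0 # sort w @ [Suc n] in
                  map (\<lambda>i. c ! Suc i - c ! i - 1) [0..<Suc (length w)])"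

definition S_restr :: "nat \<Rightarrow> vpattern set \<Rightarrow> nat list \<Rightarrow> nat list \<Rightarrow> nat list set" where
  "S_restr n B p w = {\<pi> \<in> permutations_of_set {1..n}. avoids \<pi> B \<and> take (length p) \<pi> = w}"

definition gap_vector :: "nat list \<Rightarrow> vpattern set \<Rightarrow> nat list \<Rightarrow> bool" where
  "gap_vector p B v =
     (\<forall>n w. length w = length p \<and> distinct w \<and> set w \<subseteq> {1..n} \<and> red w = p \<and>
            list_all2 (\<le>) v (gapvec n w) \<longrightarrow> S_restr n B p w = {})"

definition A_set :: "nat list \<Rightarrow> nat list \<Rightarrow> nat list set" where
  "A_set p v = {\<pi> \<in> permutations_of_set {1..length p + sum_list v}.
                  red (take (length p) \<pi>) = red p \<and>
                  gapvec (length p + sum_list v) (take (length p) \<pi>) = v}"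

end

theory Submission
  imports Defs
begin
definition rk :: "nat set \<Rightarrow> nat \<Rightarrow> nat" where
  "rk A x = card {y\<in>A. y \<le> x}"

lemma red_rk: "red w = map (rk (set w)) w"
  by (simp add: red_def rk_def)

lemma rk_smono: "finite A \<Longrightarrow> strict_mono_on A (rk A)"
proof (rule strict_mono_onI)
  fix x y assume "finite A" "x \<in> A" "y \<in> A" "x < y"
  then have "{z\<in>A. z \<le> x} \<subset> {z\<in>A. z \<le> y}" by force
  then show "rk A x < rk A y" unfolding rk_def using \<open>finite A\<close>
    by (intro psubset_card_mono) auto
qed

lemma red_map_smono:
  assumes "strict_mono_on A g" "set w \<subseteq> A"
  shows "red (map g w) = red w"
proof -
  have inj: "inj_on g A" using assms(1) by (rule strict_mono_on_imp_inj_on)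
  have "card {y \<in> g ` set w. y \<le> g x} = card {y\<in>set w. y \<le> x}" if x: "x \<in> set w" for x
  proof -
    have "{y \<in> g ` set w. y \<le> g x} = g ` {y\<in>set w. y \<le> x}"
      using x assms strict_mono_on_less_eq[OF assms(1)] by (auto simp: image_iff subset_iff)
    moreover have "inj_on g {y\<in>set w. y \<le> x}" using inj assms(2) by (auto intro: inj_on_subset)
    ultimately show ?thesis by (simp add: card_image)
  qed
  then show ?thesis by (simp add: red_def)
qed

lemma rk_range: "finite A \<Longrightarrow> x \<in> A \<Longrightarrow> rk A x \<in> {1..card A}"
  unfolding rk_def
  by (auto intro!: card_mono Suc_leI card_gt_0_iff[THEN iffD2])

lemma rk_image: assumes "finite A" shows "rk A ` A = {1..card A}"
proof -
  have inj: "inj_on (rk A) A" using rk_smono[OF assms] by (rule strict_mono_on_imp_inj_on)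
  have "rk A ` A \<subseteq> {1..card A}" using rk_range[OF assms] by auto
  moreover have "card (rk A ` A) = card {1..card A}" using card_image[OF inj] by simp
  ultimately show ?thesis by (intro card_subset_eq) auto
qed

lemma red_perm:
  assumes "distinct s" shows "red s \<in> permutations_of_set {1..length s}"
proof -
  have inj: "inj_on (rk (set s)) (set s)" using rk_smono by (intro strict_mono_on_imp_inj_on) auto
  show ?thesis unfolding red_rk permutations_of_set_def
    using rk_image[of "set s"] distinct_card[OF assms] inj assms
    by (auto simp: distinct_map)
qed

lemma red_id: assumes "p \<in> permutations_of_set {1..k}" shows "red p = p"
proof -
  have s: "set p = {1..k}" using assms by (simp add: permutations_of_set_def)
  have "rk {1..k} x = x" if "x \<in> {1..k}" for x
  proof -
    have "{y\<in>{1..k}. y \<le> x} = {1..x}" using that by auto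
    then show ?thesis by (simp add: rk_def)
  qed
  then show ?thesis unfolding red_rk s by (intro map_idI) (auto simp: s)
qed

lemma gap_char:
  assumes dw: "distinct w" and sw: "set w \<subseteq> {1..n}" and i: "i < Suc (length w)"
  shows "gapvec n w ! i = card {x\<in>{1..n}. x \<notin> set w \<and> card {y\<in>set w. y < x} = i}"
proof -
  define s where "s = sort w"
  define k where "k = length w"
  have ls: "length s = k" by (simp add: s_def k_def)
  have ss: "set s = set w" by (simp add: s_def)
  have st: "sorted_wrt (<) s" using dw by (simp add: s_def strict_sorted_iff)
  have srt: "sorted s" by (simp add: s_def)
  have ds: "distinct s" using dw by (simp add: s_def)
  define lo where "lo = (if i = 0 then 0 else s ! (i - 1))"
  define hi where "hi = (if i = k then Suc n else s ! i)"
  have ik: "i \<le> k" using i k_def by simp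
  have g: "gapvec n w ! i = hi - lo - 1"
    using i unfolding gapvec_def Let_def lo_def hi_def s_def k_def
    by (cases "i = length w") (auto simp: nth_append nth_Cons')
  have sn: "\<And>j. j < k \<Longrightarrow> s ! j \<in> {1..n}" using sw ss ls nth_mem by (metis subsetD)
  have cnt: "card {y\<in>set w. y < x} = card {j. j < k \<and> s ! j < x}" for x
  proof -
    have "{y\<in>set s. y < x} = (nth s) ` {j. j < k \<and> s ! j < x}"
      using ls by (auto simp: in_set_conv_nth)
    moreover have "inj_on (nth s) {j. j < k \<and> s ! j < x}" using ds ls by (intro inj_on_nth) auto
    ultimately show ?thesis by (simp add: card_image ss)
  qed
  have mono: "\<And>a b. a \<le> b \<Longrightarrow> b < k \<Longrightarrow> s ! a \<le> s ! b" using srt ls by (simp add: sorted_nth_mono)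
  have smono: "\<And>a b. a < b \<Longrightarrow> b < k \<Longrightarrow> s ! a < s ! b" using st ls by (simp add: sorted_wrt_nth_less)
  have "{x\<in>{1..n}. x \<notin> set w \<and> card {y\<in>set w. y < x} = i} = {lo<..<hi}"
  proof (intro equalityI subsetI)
    fix x assume "x \<in> {x\<in>{1..n}. x \<notin> set w \<and> card {y\<in>set w. y < x} = i}"
    then have x: "x \<in> {1..n}" "x \<notin> set s" "card {j. j < k \<and> s ! j < x} = i"
      using ss cnt by auto
    have "lo < x"
    proof (cases "i = 0")
      case True then show ?thesis using x by (simp add: lo_def)
    next
      case False
      show ?thesis
      proof (rule ccontr)
        assume nl: "\<not> lo < x"
        have "s ! (i-1) \<in> set s" using False ik ls by simp
        then have "x \<noteq> s ! (i-1)" using x(2) by auto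
        then have xl: "x < s ! (i - 1)" using nl False by (auto simp: lo_def)
        have "j < i - 1" if "j < k" "s ! j < x" for j
        proof (rule ccontr)
          assume "\<not> j < i - 1"
          then have "s ! (i-1) \<le> s ! j" using mono that by simp
          then show False using that xl by simp
        qed
        then have "{j. j < k \<and> s ! j < x} \<subseteq> {..<i-1}" by auto
        then have "card {j. j < k \<and> s ! j < x} \<le> i - 1" by (metis card_lessThan card_mono finite_lessThan)
        then show False using x(3) False by simp
      qed
    qed
    moreover have "x < hi"
    proof (cases "i = k")
      case True then show ?thesis using x by (simp add: hi_def)
    next
      case False
      then have ik': "i < k" using ik by simp
      show ?thesis
      proof (rule ccontr)
        assume nh: "\<not> x < hi"
        have "s ! i \<in> set s" using ik' ls by simp
        then have "x \<noteq> s ! i" using x(2) by auto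
        then have xh: "s ! i < x" using nh False by (auto simp: hi_def)
        have "j < k \<and> s ! j < x" if "j \<le> i" for j
        proof -
          have "s ! j \<le> s ! i" using mono that ik' by simp
          then show ?thesis using that ik' xh by simp
        qed
        then have "{..i} \<subseteq> {j. j < k \<and> s ! j < x}" by auto
        then have "card {..i} \<le> card {j. j < k \<and> s ! j < x}" by (intro card_mono) auto
        then show False using x(3) by simp
      qed
    qed
    ultimately show "x \<in> {lo<..<hi}" by simp
  next
    fix x assume x: "x \<in> {lo<..<hi}"
    have hin: "hi \<le> Suc n"
    proof (cases "i = k")
      case False then have "s ! i \<le> n" using sn ik by fastforce
      then show ?thesis using False by (simp add: hi_def)
    qed (simp add: hi_def)
    have x1: "x \<in> {1..n}" using x hin by auto
    have nx: "x \<notin> set s"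
    proof
      assume "x \<in> set s"
      then obtain j where j: "j < k" "s ! j = x" using ls by (auto simp: in_set_conv_nth)
      show False
      proof (cases "j < i")
        case True
        then have "s ! j \<le> lo" using mono[of j "i - 1"] ik j by (auto simp: lo_def)
        then show False using x j by simp
      next
        case False
        then have "i < k" using j by simp
        then have "hi \<le> s ! j" using mono[of i j] False j by (auto simp: hi_def)
        then show False using x j by simp
      qed
    qed
    have "{j. j < k \<and> s ! j < x} = {..<i}"
    proof (intro equalityI subsetI)
      fix j assume j: "j \<in> {j. j < k \<and> s ! j < x}"
      show "j \<in> {..<i}"
      proof (rule ccontr)
        assume "j \<notin> {..<i}"
        then have "i \<le> j" by simp
        then have "i < k" "s ! i \<le> s ! j" using j mono by auto
        then show False using j x by (simp add: hi_def)
      qed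
    next
      fix j assume j: "j \<in> {..<i}"
      then have "s ! j \<le> lo" using mono[of j "i - 1"] ik by (auto simp: lo_def)
      then show "j \<in> {j. j < k \<and> s ! j < x}" using j ik x by auto
    qed
    then show "x \<in> {x\<in>{1..n}. x \<notin> set w \<and> card {y\<in>set w. y < x} = i}"
      using x1 nx ss cnt by auto
  qed
  then show ?thesis using g by simp
qed

lemma loc_mono:
  assumes "\<forall>j. Suc j < l \<longrightarrow> (f::nat\<Rightarrow>nat) j < f (Suc j)" "a \<le> b" "b < l"
  shows "f a \<le> f b"
  using assms(2,3)
proof (induction b)
  case 0 then show ?case by simp
next
  case (Suc b)
  show ?case
  proof (cases "a = Suc b")
    case False
    then have "f a \<le> f b" using Suc by simp
    moreover have "f b < f (Suc b)" using assms(1) Suc.prems by simp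
    ultimately show ?thesis by simp
  qed simp
qed

theorem mainTheorem1:
  fixes B :: "vpattern set" and p v :: "nat list" and k :: nat
  assumes "finite B"
    and "\<forall>P\<in>B. valid_vpattern P"
    and "p \<in> permutations_of_set {1..k}"
    and "length v = Suc k"
    and "\<forall>\<pi>\<in>A_set p v. \<exists>P\<in>B. \<exists>idx. copy_at \<pi> P idx \<and> idx (head_last (snd P)) < k"
  shows "gap_vector p B v"
  unfolding gap_vector_def
proof (intro allI impI)
  fix n w
  assume H: "length w = length p \<and> distinct w \<and> set w \<subseteq> {1..n} \<and> red w = p \<and>
            list_all2 (\<le>) v (gapvec n w)"
  have lp: "length p = k" using assms(3) distinct_card[of p]
    by (auto simp: permutations_of_set_def)
  have lw: "length w = k" and dw: "distinct w" and sw: "set w \<subseteq> {1..n}" and rw: "red w = p"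
    and la: "list_all2 (\<le>) v (gapvec n w)" using H lp by auto
  show "S_restr n B p w = {}"
  proof (rule ccontr)
    assume "S_restr n B p w \<noteq> {}"
    then obtain \<pi> where pS: "\<pi> \<in> S_restr n B p w" by blast
    have spi: "set \<pi> = {1..n}" and dpi: "distinct \<pi>" and av: "avoids \<pi> B" and tk: "take k \<pi> = w"
      using pS lp by (auto simp: S_restr_def permutations_of_set_def)
    have lpi: "length \<pi> = n" using spi dpi distinct_card[of \<pi>] by simp
    have kn: "k \<le> n" using tk lw lpi by (metis length_take min.absorb_iff1 min.commute)
    have pw: "\<And>j. j < k \<Longrightarrow> \<pi> ! j = w ! j" using tk by (metis nth_take)
    define lwf where "lwf x = card {y\<in>set w. y < x}" for x
    define G where "G i = {x\<in>{1..n}. x \<notin> set w \<and> lwf x = i}" for i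
    have vG: "v ! i \<le> card (G i)" if "i < Suc k" for i
    proof -
      have "v ! i \<le> gapvec n w ! i" using la that assms(4) by (simp add: list_all2_nthD)
      also have "\<dots> = card (G i)" unfolding G_def lwf_def
        using gap_char[OF dw sw] that lw by simp
      finally show ?thesis .
    qed
    have "\<forall>i. \<exists>T. i < Suc k \<longrightarrow> T \<subseteq> G i \<and> card T = v ! i"
      using vG by (meson obtain_subset_with_card_n)
    then obtain Tf where Tf: "\<And>i. i < Suc k \<Longrightarrow> Tf i \<subseteq> G i \<and> card (Tf i) = v ! i"
      by metis
    define T where "T = (\<Union>i\<in>{..<Suc k}. Tf i)"
    have fG: "finite (G i)" for i by (simp add: G_def)
    have fTf: "i < Suc k \<Longrightarrow> finite (Tf i)" for i using Tf fG by (meson finite_subset)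
    have TG: "T \<subseteq> {1..n} - set w" using Tf unfolding T_def G_def by fastforce
    have fT: "finite T" using TG by (meson finite_Diff finite_atLeastAtMost finite_subset)
    have TI: "{x\<in>T. lwf x = i} = Tf i" if "i < Suc k" for i
      using Tf that unfolding T_def G_def by fastforce
    have cT: "card T = sum_list v"
    proof -
      have "card T = (\<Sum>i<Suc k. card (Tf i))" unfolding T_def
      proof (rule card_UN_disjoint)
        show "\<forall>i\<in>{..<Suc k}. \<forall>j\<in>{..<Suc k}. i \<noteq> j \<longrightarrow> Tf i \<inter> Tf j = {}"
        proof (intro ballI impI)
          fix i j assume ij: "i \<in> {..<Suc k}" "j \<in> {..<Suc k}" "i \<noteq> j"
          have a: "\<forall>x\<in>Tf i. lwf x = i" using Tf[of i] ij by (auto simp: G_def)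
          have b: "\<forall>x\<in>Tf j. lwf x = j" using Tf[of j] ij by (auto simp: G_def)
          show "Tf i \<inter> Tf j = {}" using a b ij(3) by (metis disjoint_iff)
        qed
      qed (use fTf in auto)
      also have "\<dots> = (\<Sum>i<Suc k. v ! i)" using Tf by simp
      also have "\<dots> = sum_list v" using assms(4) by (simp add: sum_list_sum_nth lessThan_atLeast0)
      finally show ?thesis .
    qed
    define J where "J = {j\<in>{k..<n}. \<pi> ! j \<in> T}"
    have fJ: "finite J" by (simp add: J_def)
    have imJ: "(nth \<pi>) ` J = T"
    proof (intro equalityI subsetI)
      fix t assume "t \<in> (nth \<pi>) ` J" then show "t \<in> T" by (auto simp: J_def)
    next
      fix t assume t: "t \<in> T"
      then have "t \<in> set \<pi>" using TG spi by auto
      then obtain j where j: "j < n" "\<pi> ! j = t" using lpi by (auto simp: in_set_conv_nth)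
      have "\<not> j < k"
      proof
        assume "j < k" then have "t \<in> set w" using j pw lw by (metis nth_mem)
        then show False using t TG by auto
      qed
      then show "t \<in> (nth \<pi>) ` J" using j t unfolding J_def by force
    qed
    have injJ: "inj_on (nth \<pi>) J" using dpi lpi by (intro inj_on_nth) (auto simp: J_def)
    have cJ: "card J = sum_list v" using cT imJ card_image[OF injJ] by simp
    define SL where "SL = sorted_list_of_set J"
    define L where "L = [0..<k] @ SL"
    define s where "s = map (nth \<pi>) L"
    have sSL: "set SL = J" "distinct SL" "length SL = card J" using fJ by (auto simp: SL_def)
    have Lk: "\<And>j. j < k \<Longrightarrow> L ! j = j" by (simp add: L_def nth_append)
    have lL: "length L = k + sum_list v" using sSL cJ by (simp add: L_def)
    have Lsort: "sorted_wrt (<) L" unfolding L_def using fJ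
      by (auto simp: sorted_wrt_append SL_def J_def)
    have Lbd: "\<forall>x\<in>set L. x < n" using kn by (auto simp: L_def sSL J_def)
    have mw: "map (nth \<pi>) [0..<k] = w" using pw lw by (intro nth_equalityI) auto
    have s_eq: "s = w @ map (nth \<pi>) SL" by (simp add: s_def L_def mw)
    have ss: "set s = set w \<union> T" using imJ sSL by (simp add: s_eq)
    have ds: "distinct s" unfolding s_eq using dw sSL injJ imJ TG
      by (auto simp: distinct_map)
    define N where "N = k + sum_list v"
    have ls: "length s = N" by (simp add: s_def lL N_def)
    define r where "r = rk (set s)"
    define \<pi>' where "\<pi>' = red s"
    have pi'm: "\<pi>' = map r s" by (simp add: \<pi>'_def r_def red_rk)
    have rsm: "strict_mono_on (set s) r" unfolding r_def by (rule rk_smono) simp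
    have rinj: "inj_on r (set s)" using rsm by (rule strict_mono_on_imp_inj_on)
    have pi'P: "\<pi>' \<in> permutations_of_set {1..N}" using red_perm[OF ds] ls by (simp add: \<pi>'_def)
    have spi': "set \<pi>' = {1..N}" using pi'P by (simp add: permutations_of_set_def)
    have tk': "take k \<pi>' = map r w" by (simp add: pi'm s_eq lw)
    have swA: "set w \<subseteq> set s" by (simp add: s_eq)
    have red1: "red (take k \<pi>') = red p"
      using tk' red_map_smono[OF rsm swA] rw red_id[OF assms(3)] by simp
    have gv: "gapvec N (take k \<pi>') = v"
    proof (rule nth_equalityI)
      show "length (gapvec N (take k \<pi>')) = length v"
        using assms(4) lw tk' by (simp add: gapvec_def Let_def)
    next
      fix i assume "i < length (gapvec N (take k \<pi>'))"
      then have i: "i < Suc k" using lw tk' by (simp add: gapvec_def Let_def)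
      have dmw: "distinct (map r w)" using dw rinj swA by (simp add: distinct_map inj_on_subset)
      have smw: "set (map r w) \<subseteq> {1..N}" using swA spi' pi'm by auto
      have "gapvec N (take k \<pi>') ! i
          = card {x\<in>{1..N}. x \<notin> set (map r w) \<and> card {y\<in>set (map r w). y < x} = i}"
        using gap_char[OF dmw smw] i lw tk' by simp
      also have "{x\<in>{1..N}. x \<notin> set (map r w) \<and> card {y\<in>set (map r w). y < x} = i}
               = r ` {x\<in>set s. x \<notin> set w \<and> lwf x = i}"
      proof -
        have e1: "{1..N} = r ` set s" using spi' pi'm by simp
        have e2: "card {y\<in>set (map r w). y < r x} = lwf x" if x: "x \<in> set s" for x
        proof -
          have "{y\<in>set (map r w). y < r x} = r ` {y\<in>set w. y < x}"
            using strict_mono_on_less[OF rsm] x swA by (auto simp: image_iff subset_iff)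
          moreover have "inj_on r {y\<in>set w. y < x}" using rinj swA by (auto intro: inj_on_subset)
          ultimately show ?thesis by (simp add: card_image lwf_def)
        qed
        have e3: "r x \<notin> set (map r w) \<longleftrightarrow> x \<notin> set w" if x: "x \<in> set s" for x
          using rinj x swA by (auto simp: inj_on_def subset_iff)
        show ?thesis unfolding e1 using e2 e3 by auto
      qed
      also have "card \<dots> = card {x\<in>set s. x \<notin> set w \<and> lwf x = i}"
        using rinj by (intro card_image) (auto intro: inj_on_subset)
      also have "{x\<in>set s. x \<notin> set w \<and> lwf x = i} = {x\<in>T. lwf x = i}"
        using ss TG by auto
      also have "\<dots> = Tf i" using TI i by simp
      also have "card (Tf i) = v ! i" using Tf i by simp
      finally show "gapvec N (take k \<pi>') ! i = v ! i" .
    qed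
    have "\<pi>' \<in> A_set p v" unfolding A_set_def using pi'P red1 gv lp by (simp add: N_def)
    then obtain P idx where PB: "P \<in> B" and cp: "copy_at \<pi>' P idx"
      and hd: "idx (head_last (snd P)) < k" using assms(5) by blast
    define \<sigma> where "\<sigma> = fst P"
    define X where "X = snd P"
    define l where "l = length \<sigma>"
    have vP: "X \<subseteq> {1..<l}" using assms(2) PB by (simp add: valid_vpattern_def X_def l_def \<sigma>_def)
    have c1: "\<forall>j. Suc j < l \<longrightarrow> idx j < idx (Suc j)"
      and c2: "\<forall>j<l. idx j < length \<pi>'"
      and c3: "red (map (\<lambda>j. \<pi>' ! idx j) [0..<l]) = \<sigma>"
      and c4: "\<forall>x\<in>X. idx x = Suc (idx (x - 1))"
      using cp by (simp_all add: copy_at_def Let_def \<sigma>_def X_def l_def)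
    have lpi': "length \<pi>' = length L" by (simp add: pi'm s_def)
    define idx2 where "idx2 j = L ! idx j" for j
    have "copy_at \<pi> P idx2"
      unfolding copy_at_def Let_def \<sigma>_def[symmetric] X_def[symmetric] l_def[symmetric]
    proof (intro conjI allI impI ballI)
      fix j assume "Suc j < l"
      then show "idx2 j < idx2 (Suc j)" unfolding idx2_def
        using c1 c2 lpi' Lsort by (simp add: sorted_wrt_nth_less)
    next
      fix j assume "j < l"
      then show "idx2 j < length \<pi>" unfolding idx2_def using c2 lpi' Lbd lpi by auto
    next
      have e: "map (\<lambda>j. \<pi>' ! idx j) [0..<l] = map r (map (\<lambda>j. \<pi> ! idx2 j) [0..<l])"
        using c2 lpi' by (simp add: pi'm s_def idx2_def)
      have "set (map (\<lambda>j. \<pi> ! idx2 j) [0..<l]) \<subseteq> set s"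
        using c2 lpi' by (auto simp: s_def idx2_def)
      then have "red (map r (map (\<lambda>j. \<pi> ! idx2 j) [0..<l])) = red (map (\<lambda>j. \<pi> ! idx2 j) [0..<l])"
        by (rule red_map_smono[OF rsm])
      then show "red (map (\<lambda>j. \<pi> ! idx2 j) [0..<l]) = \<sigma>"
        using c3 e by simp
    next
      fix x assume x: "x \<in> X"
      have fX: "finite X" using vP by (meson finite_atLeastLessThan finite_subset)
      have xm: "x \<le> head_last X" using x fX by (auto simp: head_last_def)
      have ml: "head_last X < l" using x vP fX by (auto simp: head_last_def)
      have "idx x \<le> idx (head_last X)" using loc_mono[OF c1 xm ml] .
      then have xk: "idx x < k" using hd X_def by simp
      have "idx (x - 1) < idx x" using c4 x by (metis lessI)
      then show "idx2 x = Suc (idx2 (x - 1))" unfolding idx2_def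
        using xk Lk c4 x by simp
    qed
    then have "contains \<pi> P" by (auto simp: contains_def)
    then show False using av PB by (auto simp: avoids_def)
  qed
qed

end
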